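(* Assume $J$ satisfies (J1), (J2), (J3), (J4) and $h$ satisfies (h1), (h2). Let $u$ be a minimizer for $H$ in $Q_\ell(q)$, for some $q\in\mathbb Z^d$ and $\ell\in\mathbb N$. Then $$H_{Q_\ell(q)}(u)\le\bar C\,\ell^{d-1}\Big(1+\sum_{m=1}^{\ell}\sigma(m)\Big),$$ for a constant $\bar C\ge1$ depending only on $d$, $\mu$ and $\tau$. Moreover, if $h$ vanishes in $Q_\ell(q)$, $\bar C$ may be chosen depending only on $d$.
   Context: Fix $d\ge2$, $|x|:=\sum_n|x_n|$, $|x|_\infty:=\max_n|x_n|$. Configurations are maps $u:\mathbb Z^d\to\{-1,1\}$. Given $J:\mathbb Z^d\times\mathbb Z^d\to[0,\infty)$ and $h:\mathbb Z^d\to\mathbb R$, for finite $\Gamma$: $H_\Gamma(u):=\sum_{(i,j)\in\mathbb Z^{2d}\setminus(\mathbb Z^d\setminus\Gamma)^2}J_{ij}(1-u_iu_j)+\sum_{i\in\Gamma}h_iu_i$; $u$ is a minimizer for $H$ in $\Gamma$ if $H_\Gamma(u)\le H_\Gamma(v)$ for all configurations $v$ agreeing with $u$ outside $\Gamma$. $Q_\ell(q):=\{i\in\mathbb Z^d:|i-q|_\infty\le\ell\}$. Conditions (constants $\Lambda\ge\lambda>0$, $\mu>0$, $\tau\in\mathbb N$): (J1) $J_{ij}=J_{ji}$; (J2) $J_{ii}=0$; (J3) $J_{ij}\ge\lambda$ if $|i-j|=1$; (J4) $\sum_jJ_{ij}\le\Lambda$ for all $i$; (h1) $\sup_i|h_i|\le\mu$;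 (h2) $\sum_{i\in F}h_i=0$ for every fundamental domain $F$ (set of representatives) of $\mathbb Z^d/\tau\mathbb Z^d$. For $R\in\mathbb N$, $\sigma(R):=\sup_{i\in\mathbb Z^d}\sum_{j:\,|j-i|_\infty\ge R}J_{ij}$. *)

theory Defs
  imports "HOL-Analysis.Analysis"
begin

text \<open>Points of Z^d are integer vectors indexed by a finite type 'd (d = CARD('d)).\<close>

definition l1norm :: "int ^ 'd::finite \<Rightarrow> int" where
  "l1norm x = (\<Sum>k\<in>UNIV. \<bar>x $ k\<bar>)"

definition linfnorm :: "int ^ 'd::finite \<Rightarrow> int" where
  "linfnorm x = Max (range (\<lambda>k. \<bar>x $ k\<bar>))"

definition config :: "(int ^ 'd::finite \<Rightarrow> real) \<Rightarrow> bool" where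
  "config u \<longleftrightarrow> (\<forall>i. u i \<in> {-1, 1})"

definition Ham :: "(int ^ 'd::finite \<Rightarrow> int ^ 'd \<Rightarrow> real) \<Rightarrow> (int ^ 'd \<Rightarrow> real)
    \<Rightarrow> (int ^ 'd) set \<Rightarrow> (int ^ 'd \<Rightarrow> real) \<Rightarrow> real" where
  "Ham J h \<Gamma> u =
     infsum (\<lambda>(i, j). J i j * (1 - u i * u j)) (UNIV - (- \<Gamma>) \<times> (- \<Gamma>))
     + (\<Sum>i\<in>\<Gamma>. h i * u i)"

definition minimizer :: "(int ^ 'd::finite \<Rightarrow> int ^ 'd \<Rightarrow> real) \<Rightarrow> (int ^ 'd \<Rightarrow> real)
    \<Rightarrow> (int ^ 'd) set \<Rightarrow> (int ^ 'd \<Rightarrow> real) \<Rightarrow> bool" where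
  "minimizer J h \<Gamma> u \<longleftrightarrow> config u \<and>
     (\<forall>v. config v \<longrightarrow> (\<forall>i. i \<notin> \<Gamma> \<longrightarrow> v i = u i) \<longrightarrow> Ham J h \<Gamma> u \<le> Ham J h \<Gamma> v)"

definition cube :: "nat \<Rightarrow> int ^ 'd::finite \<Rightarrow> (int ^ 'd) set" where
  "cube l q = {i. linfnorm (i - q) \<le> int l}"

definition fundamental_domain :: "nat \<Rightarrow> (int ^ 'd::finite) set \<Rightarrow> bool" where
  "fundamental_domain \<tau> F \<longleftrightarrow>
     (\<forall>x. \<exists>!y. y \<in> F \<and> (\<forall>k. x $ k mod int \<tau> = y $ k mod int \<tau>))"

definition sigmaJ :: "(int ^ 'd::finite \<Rightarrow> int ^ 'd \<Rightarrow> real) \<Rightarrow> nat \<Rightarrow> real" where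
  "sigmaJ J R = (SUP i. infsum (\<lambda>j. J i j) {j. linfnorm (j - i) \<ge> int R})"

definition kernel_ok :: "real \<Rightarrow> real \<Rightarrow> (int ^ 'd::finite \<Rightarrow> int ^ 'd \<Rightarrow> real) \<Rightarrow> bool" where
  "kernel_ok lam Lam J \<longleftrightarrow>
     (\<forall>i j. J i j \<ge> 0) \<and>
     (\<forall>i j. J i j = J j i) \<and>
     (\<forall>i. J i i = 0) \<and>
     (\<forall>i j. l1norm (i - j) = 1 \<longrightarrow> J i j \<ge> lam) \<and>
     (\<forall>i. (\<lambda>j. J i j) summable_on UNIV \<and> infsum (\<lambda>j. J i j) UNIV \<le> Lam)"

definition field_ok :: "real \<Rightarrow> nat \<Rightarrow> (int ^ 'd::finite \<Rightarrow> real) \<Rightarrow> bool" where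
  "field_ok \<mu> \<tau> h \<longleftrightarrow>
     (\<forall>i. \<bar>h i\<bar> \<le> \<mu>) \<and>
     (\<forall>F. fundamental_domain \<tau> F \<longrightarrow> sum h F = 0)"

end

theory Submission
  imports Defs
begin


lemma linf_ge: "\<bar>x $ k\<bar> \<le> linfnorm x"
  unfolding linfnorm_def by (rule Max_ge) auto

lemma linf_attained: "\<exists>k. linfnorm x = \<bar>x $ k\<bar>"
  proof -
  have "Max (range (\<lambda>k. \<bar>x$k\<bar>)) \<in> range (\<lambda>k. \<bar>x$k\<bar>)" by (rule Max_in) auto
  then obtain k where "Max (range (\<lambda>k. \<bar>x$k\<bar>)) = \<bar>x$k\<bar>" by blast
  then show ?thesis unfolding linfnorm_def by blast
qed

lemma cube_coord: "i \<in> cube l q \<Longrightarrow> \<bar>i$k - q$k\<bar> \<le> int l"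
  unfolding cube_def using linf_ge[of "i - q" k] by auto

lemma finite_cube: "finite (cube l q)"
proof -
  let ?B = "PiE UNIV (\<lambda>k. {q$k - int l .. q$k + int l})"
  have "inj_on (\<lambda>i k. i $ k) (cube l q)" by (auto simp: inj_on_def vec_eq_iff)
  moreover have "(\<lambda>i k. i$k) ` cube l q \<subseteq> ?B"
  proof
    fix f assume "f \<in> (\<lambda>i k. i$k) ` cube l q"
    then obtain i where "i \<in> cube l q" "f = (\<lambda>k. i$k)" by auto
    have "\<And>k. \<bar>i$k - q$k\<bar> \<le> int l" using cube_coord[OF \<open>i \<in> cube l q\<close>] by blast
    then have "\<And>k. i$k \<in> {q$k - int l .. q$k + int l}" by (simp add: abs_le_iff) (smt (verit))
    then show "f \<in> ?B" using \<open>f = _\<close> by (auto simp: PiE_iff)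
  qed
  moreover have "finite ?B" by (rule finite_PiE) auto
  ultimately show ?thesis using inj_on_finite by blast
qed

lemma slice_card:
  fixes q :: "int ^ 'd::finite"
  shows "card {i \<in> cube l q. i$c - q$c = t} \<le> (2*l+1)^(CARD('d) - 1)"
proof -
  let ?A = "{i \<in> cube l q. i$c - q$c = t}"
  let ?B = "PiE (UNIV - {c}) (\<lambda>_. {-int l .. int l})"
  let ?f = "\<lambda>i. restrict (\<lambda>k. i$k - q$k) (UNIV - {c})"
  have "inj_on ?f ?A"
  proof (rule inj_onI)
    fix i j assume i: "i\<in>?A" and j: "j\<in>?A" and eq: "?f i = ?f j"
    show "i = j"
    proof (rule vec_eq_iff[THEN iffD2], rule allI)
      fix k show "i$k = j$k"
      proof (cases "k = c")
        case True with i j show ?thesis by auto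
      next
        case False
        then have "?f i k = ?f j k" using eq by simp
        with False show ?thesis by simp
      qed
    qed
  qed
  moreover have "?f ` ?A \<subseteq> ?B"
  proof
    fix f assume "f \<in> ?f ` ?A"
    then obtain i where "i \<in> ?A" "f = ?f i" by blast
    have "\<And>k. \<bar>i$k - q$k\<bar> \<le> int l" using cube_coord[of i l q] \<open>i \<in> ?A\<close> by blast
    then have "\<And>k. i$k - q$k \<in> {-int l .. int l}" by (simp add: abs_le_iff) (smt (verit))
    then show "f \<in> ?B" using \<open>f = _\<close> by (auto simp: PiE_iff)
  qed
  moreover have "finite ?B" by (rule finite_PiE) auto
  ultimately have "card ?A \<le> card ?B" by (rule card_inj_on_le)
  also have "card ?B = (2*l+1)^(CARD('d) - 1)"
  proof -
    have "nat (2 * int l + 1) = 2*l+1" by arith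
    then show ?thesis by (simp add: card_PiE card_Diff_singleton)
  qed
  finally show ?thesis .
qed

definition M :: "nat \<Rightarrow> int \<Rightarrow> nat" where
  "M l t = nat (max 1 (int l - \<bar>t\<bar>))"

lemma card4: "card {a,b,c,(d::int)} \<le> 4"
proof -
  have "{a,b,c,d} = set [a,b,c,d]" by simp
  then show ?thesis using card_length[of "[a,b,c,d]"] by simp
qed

lemma fiber_card:
  fixes q :: "int ^ 'd::finite"
  shows "card {i \<in> cube l q. M l (i$c - q$c) = m} \<le> 4*(2*l+1)^(CARD('d) - 1)"
proof -
  let ?T = "{int l - int m, int m - int l, int l, - int l}"
  have "{i \<in> cube l q. M l (i$c - q$c) = m} \<subseteq> (\<Union>t\<in>?T. {i \<in> cube l q. i$c - q$c = t})"
  proof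
    fix i assume i: "i \<in> {i \<in> cube l q. M l (i$c - q$c) = m}"
    then have a: "\<bar>i$c - q$c\<bar> \<le> int l" "nat (max 1 (int l - \<bar>i$c - q$c\<bar>)) = m"
      using cube_coord[of i l q c] by (auto simp: M_def)
    then have "i$c - q$c \<in> ?T" by (auto split: if_splits simp: abs_if max_def)
    with i show "i \<in> (\<Union>t\<in>?T. {i \<in> cube l q. i$c - q$c = t})" by auto
  qed
  then have "card {i \<in> cube l q. M l (i$c - q$c) = m} \<le> card (\<Union>t\<in>?T. {i \<in> cube l q. i$c - q$c = t})"
    by (intro card_mono) (auto intro: finite_subset[OF _ finite_cube])
  also have "\<dots> \<le> (\<Sum>t\<in>?T. card {i \<in> cube l q. i$c - q$c = t})"
    by (rule card_UN_le) simp
  also have "\<dots> \<le> card ?T * (2*l+1)^(CARD('d) - 1)"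
    using sum_bounded_above[of ?T "\<lambda>t. card {i \<in> cube l q. i$c - q$c = t}"] slice_card[of l q c] by auto
  also have "\<dots> \<le> 4*(2*l+1)^(CARD('d) - 1)"
    using card4 by (intro mult_right_mono) auto
  finally show ?thesis .
qed

lemma sum_cube:
  fixes q :: "int ^ 'd::finite" and F :: "nat \<Rightarrow> real"
  assumes F: "\<And>m. 0 \<le> F m" and l: "l \<ge> 1"
  shows "(\<Sum>i\<in>cube l q. F (M l (i$c - q$c))) \<le> 4*(2*real l+1)^(CARD('d) - 1) * (\<Sum>m=1..l. F m)"
proof -
  have img: "(\<lambda>i. M l (i$c-q$c)) ` cube l q \<subseteq> {1..l}"
    using cube_coord[of _ l q c] l by (auto simp: M_def)
  have "(\<Sum>i\<in>cube l q. F (M l (i$c - q$c)))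
      = (\<Sum>m\<in>{1..l}. \<Sum>i\<in>{i. i \<in> cube l q \<and> M l (i$c - q$c) = m}. F (M l (i$c - q$c)))"
    by (rule sum.group[symmetric, OF finite_cube _ img]) simp
  also have "\<dots> = (\<Sum>m\<in>{1..l}. real (card {i \<in> cube l q. M l (i$c - q$c) = m}) * F m)"
    by (intro sum.cong refl) simp
  also have "\<dots> \<le> (\<Sum>m\<in>{1..l}. (4*(2*real l+1)^(CARD('d) - 1)) * F m)"
  proof (intro sum_mono mult_right_mono F)
    fix m
    have "real (card {i \<in> cube l q. M l (i$c - q$c) = m}) \<le> real (4*(2*l+1)^(CARD('d) - 1))"
      using fiber_card by (subst of_nat_le_iff) blast
    then show "real (card {i \<in> cube l q. M l (i$c - q$c) = m}) \<le> 4*(2*real l+1)^(CARD('d) - 1)"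
      by (simp add: add.commute)
  qed
  also have "\<dots> = 4*(2*real l+1)^(CARD('d) - 1) * (\<Sum>m=1..l. F m)"
    by (simp add: sum_distrib_left)
  finally show ?thesis .
qed



lemma ko_nonneg: "kernel_ok lam Lam J \<Longrightarrow> 0 \<le> J i j"
  unfolding kernel_ok_def by blast

lemma ko_sym: "kernel_ok lam Lam J \<Longrightarrow> J i j = J j i"
  unfolding kernel_ok_def by blast

lemma ko_summable: "kernel_ok lam Lam J \<Longrightarrow> J i summable_on E"
  unfolding kernel_ok_def by (metis summable_on_subset subset_UNIV)

lemma ko_mono: "kernel_ok lam Lam J \<Longrightarrow> E \<subseteq> E' \<Longrightarrow> infsum (J i) E \<le> infsum (J i) E'"
  by (rule infsum_mono_neutral) (auto intro: ko_summable ko_nonneg)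

lemma ko_Lam: "kernel_ok lam Lam J \<Longrightarrow> infsum (J i) E \<le> Lam"
proof -
  assume k: "kernel_ok lam Lam J"
  have "infsum (J i) E \<le> infsum (J i) UNIV" by (rule ko_mono[OF k]) auto
  also have "\<dots> \<le> Lam" using k unfolding kernel_ok_def by auto
  finally show ?thesis .
qed

lemma sigma_upper: "kernel_ok lam Lam J \<Longrightarrow> infsum (J i) {j. linfnorm (j - i) \<ge> int m} \<le> sigmaJ J m"
  unfolding sigmaJ_def
  by (rule cSUP_upper[where f="\<lambda>i. infsum (J i) {j. linfnorm (j - i) \<ge> int m}"])
     (auto intro!: bdd_aboveI2 ko_Lam)

lemma sigma_nonneg: "kernel_ok lam Lam J \<Longrightarrow> 0 \<le> sigmaJ J m"
  by (rule order_trans[OF infsum_nonneg sigma_upper]) (auto intro: ko_nonneg)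

lemma ko_union: "kernel_ok lam Lam J \<Longrightarrow> infsum (J i) (A \<union> B) \<le> infsum (J i) A + infsum (J i) B"
proof -
  assume k: "kernel_ok lam Lam J"
  have "infsum (J i) (A \<union> (B - A)) = infsum (J i) A + infsum (J i) (B - A)"
    by (rule infsum_Un_disjoint) (auto intro: ko_summable[OF k])
  then have "infsum (J i) (A \<union> B) = infsum (J i) A + infsum (J i) (B - A)" by simp
  also have "\<dots> \<le> infsum (J i) A + infsum (J i) B"
    using ko_mono[OF k, of "B - A" B] by auto
  finally show ?thesis .
qed

lemma ko_UN: assumes k: "kernel_ok lam Lam J" shows "finite C \<Longrightarrow> infsum (J i) (\<Union>c\<in>C. E c) \<le> (\<Sum>c\<in>C. infsum (J i) (E c))"
proof (induction C rule: finite_induct)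
  case empty then show ?case by simp
next
  case (insert x F)
  have "infsum (J i) (\<Union>c\<in>insert x F. E c) = infsum (J i) (E x \<union> (\<Union>c\<in>F. E c))" by simp
  also have "\<dots> \<le> infsum (J i) (E x) + infsum (J i) (\<Union>c\<in>F. E c)" by (rule ko_union[OF k])
  also have "\<dots> \<le> infsum (J i) (E x) + (\<Sum>c\<in>F. infsum (J i) (E c))" using insert by simp
  finally show ?case using insert by simp
qed

lemma outside_bound:
  fixes q :: "int ^ 'd::finite"
  assumes k: "kernel_ok lam Lam J" and i: "i \<in> cube l q"
  shows "infsum (J i) (- cube l q) \<le> (\<Sum>c\<in>UNIV. sigmaJ J (M l (i$c - q$c)))"
proof -
  let ?E = "\<lambda>c. {j. \<bar>j$c - q$c\<bar> > int l}"
  have sub: "- cube l q \<subseteq> (\<Union>c\<in>UNIV. ?E c)"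
  proof
    fix j assume "j \<in> - cube l q"
    then have "linfnorm (j - q) > int l" by (auto simp: cube_def)
    moreover obtain c where "linfnorm (j - q) = \<bar>(j - q)$c\<bar>" using linf_attained by blast
    ultimately show "j \<in> (\<Union>c\<in>UNIV. ?E c)" by auto
  qed
  have "infsum (J i) (- cube l q) \<le> infsum (J i) (\<Union>c\<in>UNIV. ?E c)" by (rule ko_mono[OF k sub])
  also have "\<dots> \<le> (\<Sum>c\<in>UNIV. infsum (J i) (?E c))" by (rule ko_UN[OF k]) simp
  also have "\<dots> \<le> (\<Sum>c\<in>UNIV. sigmaJ J (M l (i$c - q$c)))"
  proof (rule sum_mono)
    fix c
    have "?E c \<subseteq> {j. linfnorm (j - i) \<ge> int (M l (i$c - q$c))}"
    proof
      fix j assume j: "j \<in> ?E c"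
      have a: "\<bar>i$c - q$c\<bar> \<le> int l" by (rule cube_coord[OF i])
      have "\<bar>j$c - i$c\<bar> \<le> linfnorm (j - i)" using linf_ge[of "j - i" c] by simp
      moreover have "int (M l (i$c - q$c)) \<le> \<bar>j$c - i$c\<bar>"
        using j a unfolding M_def by auto
      ultimately show "j \<in> {j. linfnorm (j - i) \<ge> int (M l (i$c - q$c))}" by auto
    qed
    then have "infsum (J i) (?E c) \<le> infsum (J i) {j. linfnorm (j - i) \<ge> int (M l (i$c - q$c))}"
      by (rule ko_mono[OF k])
    also have "\<dots> \<le> sigmaJ J (M l (i$c - q$c))" by (rule sigma_upper[OF k])
    finally show "infsum (J i) (?E c) \<le> sigmaJ J (M l (i$c - q$c))" .
  qed
  finally show ?thesis .
qed



lemma has_sum_Sigma_fin: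
  fixes f :: "'a \<times> 'b \<Rightarrow> real"
  assumes fin: "finite A" and h: "\<And>i. i\<in>A \<Longrightarrow> ((\<lambda>j. f (i,j)) has_sum g i) (B i)"
  shows "(f has_sum sum g A) (Sigma A B)"
proof -
  have eq: "Sigma A B = (\<Union>i\<in>A. Pair i ` B i)" by auto
  have "(f has_sum sum g A) (\<Union>i\<in>A. Pair i ` B i)"
  proof (rule sum_has_sum[of A f "\<lambda>i. Pair i ` B i" g, OF fin])
    fix i assume i: "i\<in>A"
    have "inj_on (Pair i) (B i)" by (auto simp: inj_on_def)
    then show "(f has_sum g i) (Pair i ` B i)"
      using has_sum_reindex[of "Pair i" "B i" f "g i"] h[OF i] by (simp add: comp_def)
  qed auto
  with eq show ?thesis by simp
qed

lemma Ham_compare: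
  fixes J :: "int^'d::finite \<Rightarrow> int^'d \<Rightarrow> real" and \<Gamma> :: "(int^'d) set"
  assumes k: "kernel_ok lam Lam J" and fin: "finite \<Gamma>" and u: "config u" and s: "s = 1 \<or> s = -1"
  defines "v \<equiv> \<lambda>i. if i \<in> \<Gamma> then s else u i"
  shows "Ham J h \<Gamma> v \<le> 4 * (\<Sum>i\<in>\<Gamma>. infsum (J i) (-\<Gamma>)) + s * sum h \<Gamma>"
proof -
  define f where "f = (\<lambda>(i,j). J i j * (1 - v i * v j))"
  have vv: "\<And>i. v i = 1 \<or> v i = -1" using u s unfolding v_def config_def by auto
  have c02: "1 - v i * v j = 0 \<or> 1 - v i * v j = 2" for i j
    using vv[of i] vv[of j] by auto
  have f0: "0 \<le> f (i,j)" for i j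
    using c02[of i j] ko_nonneg[OF k, of i j] unfolding f_def by auto
  have f2: "f (i,j) \<le> 2 * J i j" for i j
    using c02[of i j] ko_nonneg[OF k, of i j] unfolding f_def by auto
  have fG: "f (i,j) = 0" if "i \<in> \<Gamma>" "j \<in> \<Gamma>" for i j
    using that s unfolding f_def v_def by auto
  have sJ: "(\<lambda>j. 2 * J i j) summable_on E" for i E
    by (rule summable_on_cmult_right) (rule ko_summable[OF k])
  define a1 where "a1 i = infsum (\<lambda>j. f (i,j)) UNIV" for i
  define a2 where "a2 i = infsum (\<lambda>j. f (j,i)) (-\<Gamma>)" for i
  have s1: "(\<lambda>j. f (i,j)) summable_on E" for i E
    by (rule summable_on_comparison_test[OF sJ]) (auto intro: f0 f2)
  have f2': "f (j,i) \<le> 2 * J i j" for i j using f2[of j i] ko_sym[OF k, of j i] by simp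
  have s2: "(\<lambda>j. f (j,i)) summable_on E" for i E
    by (rule summable_on_comparison_test[OF sJ]) (auto intro: f0 f2')
  have a1b: "a1 i \<le> 2 * infsum (J i) (-\<Gamma>)" if "i \<in> \<Gamma>" for i
  proof -
    have "a1 i \<le> infsum (\<lambda>j. 2 * J i j) (-\<Gamma>)"
      unfolding a1_def by (rule infsum_mono_neutral[OF s1 sJ]) (auto simp: f2 fG that)
    then show ?thesis by (simp add: infsum_cmult_right ko_summable[OF k])
  qed
  have a2b: "a2 i \<le> 2 * infsum (J i) (-\<Gamma>)" for i
  proof -
    have "a2 i \<le> infsum (\<lambda>j. 2 * J i j) (-\<Gamma>)"
      unfolding a2_def by (rule infsum_mono[OF s2 sJ]) (rule f2')
    then show ?thesis by (simp add: infsum_cmult_right ko_summable[OF k])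
  qed
  have h1: "(f has_sum sum a1 \<Gamma>) (\<Gamma> \<times> UNIV)"
    by (rule has_sum_Sigma_fin[OF fin]) (simp add: a1_def s1)
  have h2': "((\<lambda>(x,y). f (y,x)) has_sum sum a2 \<Gamma>) (\<Gamma> \<times> (-\<Gamma>))"
    by (rule has_sum_Sigma_fin[OF fin]) (simp add: a2_def s2)
  have h2: "(f has_sum sum a2 \<Gamma>) ((-\<Gamma>) \<times> \<Gamma>)"
    using h2' has_sum_swap by blast
  have h12: "(f has_sum (sum a1 \<Gamma> + sum a2 \<Gamma>)) (\<Gamma> \<times> UNIV \<union> (-\<Gamma>) \<times> \<Gamma>)"
    by (rule has_sum_Un_disjoint[OF h1 h2]) auto
  have seteq: "UNIV - (-\<Gamma>) \<times> (-\<Gamma>) = \<Gamma> \<times> UNIV \<union> (-\<Gamma>) \<times> \<Gamma>" by auto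
  have inf: "infsum f (UNIV - (-\<Gamma>) \<times> (-\<Gamma>)) = sum a1 \<Gamma> + sum a2 \<Gamma>"
    using h12 seteq infsumI by metis
  have hs: "(\<Sum>i\<in>\<Gamma>. h i * v i) = s * sum h \<Gamma>"
    unfolding v_def by (simp add: sum_distrib_left mult.commute)
  have "sum a1 \<Gamma> + sum a2 \<Gamma> \<le> (\<Sum>i\<in>\<Gamma>. 2 * infsum (J i) (-\<Gamma>)) + (\<Sum>i\<in>\<Gamma>. 2 * infsum (J i) (-\<Gamma>))"
    by (intro add_mono sum_mono a1b a2b)
  also have "\<dots> = 4 * (\<Sum>i\<in>\<Gamma>. infsum (J i) (-\<Gamma>))" by (simp add: sum_distrib_left[symmetric])
  finally have "sum a1 \<Gamma> + sum a2 \<Gamma> \<le> 4 * (\<Sum>i\<in>\<Gamma>. infsum (J i) (-\<Gamma>))" .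
  moreover have "Ham J h \<Gamma> v = infsum f (UNIV - (-\<Gamma>) \<times> (-\<Gamma>)) + (\<Sum>i\<in>\<Gamma>. h i * v i)"
    unfolding Ham_def f_def ..
  ultimately show ?thesis using inf hs by simp
qed



lemma core:
  fixes J :: "int^'d::finite \<Rightarrow> int^'d \<Rightarrow> real"
  assumes k: "kernel_ok lam Lam J" and l: "l \<ge> 1" and mu: "minimizer J h (cube l q) u"
  shows "Ham J h (cube l q) u \<le> (16 * real CARD('d) * 3^(CARD('d)-1)) * real l ^ (CARD('d)-1) * (1 + (\<Sum>m=1..l. sigmaJ J m))"
proof -
  let ?G = "cube l q"
  let ?S = "\<Sum>m=1..l. sigmaJ J m"
  let ?P = "(2*real l+1)^(CARD('d) - 1)"
  define s where "s = (if sum h ?G \<le> 0 then 1 else -1::real)"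
  define v where "v = (\<lambda>i. if i \<in> ?G then s else u i)"
  have cu: "config u" using mu unfolding minimizer_def by blast
  have cv: "config v" using cu unfolding config_def v_def s_def by auto
  have S0: "0 \<le> ?S" by (intro sum_nonneg sigma_nonneg[OF k])
  have "Ham J h ?G u \<le> Ham J h ?G v" using mu cv unfolding minimizer_def v_def by auto
  also have "\<dots> \<le> 4 * (\<Sum>i\<in>?G. infsum (J i) (-?G)) + s * sum h ?G"
    unfolding v_def by (rule Ham_compare[OF k finite_cube cu]) (simp add: s_def)
  also have "s * sum h ?G \<le> 0" unfolding s_def by auto
  also have "(\<Sum>i\<in>?G. infsum (J i) (-?G)) \<le> (\<Sum>i\<in>?G. \<Sum>c\<in>UNIV. sigmaJ J (M l (i$c - q$c)))"
    by (intro sum_mono outside_bound[OF k])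
  also have "\<dots> = (\<Sum>c\<in>UNIV. \<Sum>i\<in>?G. sigmaJ J (M l (i$c - q$c)))" by (rule sum.swap)
  also have "\<dots> \<le> (\<Sum>c\<in>(UNIV::'d set). 4 * ?P * ?S)"
    by (intro sum_mono sum_cube sigma_nonneg[OF k] l)
  also have "\<dots> = real CARD('d) * 4 * ?P * ?S" by simp
  also have "?P \<le> (3 * real l) ^ (CARD('d) - 1)"
    by (rule power_mono) (use l in auto)
  also have "(3 * real l) ^ (CARD('d) - 1) = 3 ^ (CARD('d) - 1) * real l ^ (CARD('d) - 1)"
    by (simp add: power_mult_distrib)
  finally have "Ham J h ?G u \<le> 16 * (real CARD('d) * 3 ^ (CARD('d) - 1) * real l ^ (CARD('d) - 1)) * ?S"
    using S0 by (auto simp: mult_right_mono mult_left_mono algebra_simps)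
  also have "\<dots> \<le> 16 * (real CARD('d) * 3 ^ (CARD('d) - 1) * real l ^ (CARD('d) - 1)) * (1 + ?S)"
    by (rule mult_left_mono) auto
  finally show ?thesis by (simp add: algebra_simps)
qed



theorem mainTheorem8:
  assumes "CARD('d::finite) \<ge> 2"
  shows
   "(\<forall>\<mu> > 0. \<forall>\<tau>::nat. \<tau> \<ge> 1 \<longrightarrow>
      (\<exists>C\<ge>1. \<forall>(lam::real) Lam (J :: int ^ 'd \<Rightarrow> int ^ 'd \<Rightarrow> real) h q l u.
         0 < lam \<longrightarrow> lam \<le> Lam \<longrightarrow> kernel_ok lam Lam J \<longrightarrow> field_ok \<mu> \<tau> h \<longrightarrow>
         l \<ge> 1 \<longrightarrow> minimizer J h (cube l q) u \<longrightarrow>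
         Ham J h (cube l q) u
           \<le> C * real l ^ (CARD('d) - 1) * (1 + (\<Sum>m=1..l. sigmaJ J m))))
    \<and>
    (\<exists>C\<ge>1. \<forall>(\<mu>::real) (\<tau>::nat) (lam::real) Lam (J :: int ^ 'd \<Rightarrow> int ^ 'd \<Rightarrow> real) h q l u.
         0 < \<mu> \<longrightarrow> \<tau> \<ge> 1 \<longrightarrow>
         0 < lam \<longrightarrow> lam \<le> Lam \<longrightarrow> kernel_ok lam Lam J \<longrightarrow> field_ok \<mu> \<tau> h \<longrightarrow>
         (\<forall>i\<in>cube l q. h i = 0) \<longrightarrow>
         l \<ge> 1 \<longrightarrow> minimizer J h (cube l q) u \<longrightarrow>
         Ham J h (cube l q) u
           \<le> C * real l ^ (CARD('d) - 1) * (1 + (\<Sum>m=1..l. sigmaJ J m)))"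
proof -
  let ?C = "16 * real CARD('d) * 3^(CARD('d)-1) :: real"
  have C1: "?C \<ge> 1"
  proof -
    have "(1::real) \<le> 3^(CARD('d)-1)" by simp
    moreover have "(1::real) \<le> real CARD('d)" by simp
    ultimately have "1 \<le> real CARD('d) * 3^(CARD('d)-1)" by (metis mult_mono' mult_1 zero_le_one)
    then show ?thesis by simp
  qed
  show ?thesis
    by (intro conjI allI impI exI[of _ ?C]; (intro conjI C1 allI impI)?; rule core; assumption)
qed


end
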